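(* Let $\mathscr{C}$ be an $(n,M,\mathcal{X},\epsilon,B,\delta)$-code for the complex AWGN channel with noise variance $\sigma^2$ belonging to the family $\mathsf{C}(C,\boldsymbol{A},\boldsymbol{L},\boldsymbol{\alpha},\boldsymbol{p},\boldsymbol{r})$ described below, with $r_c=r$ for all $c\in\{1,\dots,C\}$. Then \[ r\ge\sqrt{\sigma^2\ln\left(\frac{1}{1-(1-\epsilon)^{1/n}}\right)}. \]
   Context: Here $\ln$ is the natural logarithm. Channel: $f_{\boldsymbol{Y}|\boldsymbol{X}}(\boldsymbol{y}|\boldsymbol{\nu})=\prod_{m=1}^n \frac{1}{\pi\sigma^2}\exp(-|y_m-\nu_m|^2/\sigma^2)$. An $(n,M,\mathcal{X})$-code is $\{(\boldsymbol{u}(i),\mathcal{D}_i)\}_{i=1}^M$ with $\boldsymbol{u}(i)\in\mathcal{X}^n$ and pairwise disjoint $\mathcal{D}_i\subseteq\mathbb{C}^n$; $\gamma(\mathscr{C})=\frac1M\sum_i\big(1-\int_{\mathcal{D}_i}f_{\boldsymbol{Y}|\boldsymbol{X}}(\boldsymbol{y}|\boldsymbol{u}(i))\mathrm{d}\boldsymbol{y}\big)$; $e_i=k_1\sum_m|u_m(i)|^2+k_2\sum_m|u_m(i)|^4$ with positive constants $k_1,k_2$; $\theta(\mathscr{C},B)=\frac1M\sum_i\mathbb{1}_{\{e_i<B\}}$; an $(n,M,\mathcal{X},\epsilon,B,\delta)$-code is one with $\gamma(\mathscr{C})\le\epsilon$, $\theta(\mathscr{C},B)\le\delta$. Type $P_{\mathscr{C}}(x)=\frac1{Mn}\sum_{i,m}\mathbb{1}_{\{u_m(i)=x\}}$.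 Family $\mathsf{C}(C,\boldsymbol{A},\boldsymbol{L},\boldsymbol{\alpha},\boldsymbol{p},\boldsymbol{r})$: amplitudes $A_1>\dots>A_C>0$; $L_c\in\mathbb{N}$; phases $\alpha_c$; layer $c$ is $\{x_c^{(1)},\dots,x_c^{(L_c)}\}=\{A_c\exp(\mathrm{i}(2\pi\ell/L_c+\alpha_c)):\ell=0,\dots,L_c-1\}$; $\mathcal{X}$ is the union of the layers. Codewords are pairwise distinct with $P_{\mathscr{C}}(x_c^{(\ell)})=p_c/L_c$ for a probability vector $\boldsymbol{p}$. With radii $r_c>0$ and discs $\mathcal{G}_c^{(\ell)}=\{y:|y-x_c^{(\ell)}|\le r_c\}$, $\mathcal{D}_i=\prod_m\mathcal{D}_{i,m}$ with $\mathcal{D}_{i,m}=\mathcal{G}_c^{(\ell)}$ if $u_m(i)=x_c^{(\ell)}$; and $A_c-A_{c+1}\ge r_c+r_{c+1}$ for $c<C$. *)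

theory Defs
  imports "HOL-Probability.Probability"
begin

text \<open>Channel inputs/outputs of block length n are functions nat => complex,
  only the coordinates m < n being relevant; C^n carries the product Lebesgue measure.
  Codewords are indexed by i in {1..M}.\<close>

definition cn_measure :: "nat \<Rightarrow> (nat \<Rightarrow> complex) measure" where
  "cn_measure n = PiM {..<n} (\<lambda>_. lborel)"

definition awgn_density :: "real \<Rightarrow> nat \<Rightarrow> (nat \<Rightarrow> complex) \<Rightarrow> (nat \<Rightarrow> complex) \<Rightarrow> real" where
  "awgn_density \<sigma> n y \<nu> = (\<Prod>m<n. 1 / (pi * \<sigma>\<^sup>2) * exp (- (cmod (y m - \<nu> m))\<^sup>2 / \<sigma>\<^sup>2))"

definition is_code :: "nat \<Rightarrow> nat \<Rightarrow> complex set \<Rightarrow> (nat \<Rightarrow> nat \<Rightarrow> complex)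
    \<Rightarrow> (nat \<Rightarrow> (nat \<Rightarrow> complex) set) \<Rightarrow> bool" where
  "is_code n M X u D \<longleftrightarrow> M > 0 \<and> (\<forall>i\<in>{1..M}. \<forall>m<n. u i m \<in> X) \<and>
     (\<forall>i\<in>{1..M}. \<forall>j\<in>{1..M}. i \<noteq> j \<longrightarrow> D i \<inter> D j = {})"

definition avg_error :: "real \<Rightarrow> nat \<Rightarrow> nat \<Rightarrow> (nat \<Rightarrow> nat \<Rightarrow> complex)
    \<Rightarrow> (nat \<Rightarrow> (nat \<Rightarrow> complex) set) \<Rightarrow> real" where
  "avg_error \<sigma> n M u D = (1 / real M) * (\<Sum>i\<in>{1..M}.
      1 - (LINT y:D i|cn_measure n. awgn_density \<sigma> n y (u i)))"

definition energy :: "real \<Rightarrow> real \<Rightarrow> nat \<Rightarrow> (nat \<Rightarrow> complex) \<Rightarrow> real" where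
  "energy k1 k2 n w = k1 * (\<Sum>m<n. (cmod (w m))^2) + k2 * (\<Sum>m<n. (cmod (w m))^4)"

definition low_energy_frac :: "real \<Rightarrow> real \<Rightarrow> nat \<Rightarrow> nat \<Rightarrow> (nat \<Rightarrow> nat \<Rightarrow> complex) \<Rightarrow> real \<Rightarrow> real" where
  "low_energy_frac k1 k2 n M u B = (1 / real M) * (\<Sum>i\<in>{1..M}. if energy k1 k2 n (u i) < B then 1 else 0)"

definition is_code_full :: "real \<Rightarrow> real \<Rightarrow> real \<Rightarrow> nat \<Rightarrow> nat \<Rightarrow> complex set \<Rightarrow> real \<Rightarrow> real \<Rightarrow> real
    \<Rightarrow> (nat \<Rightarrow> nat \<Rightarrow> complex) \<Rightarrow> (nat \<Rightarrow> (nat \<Rightarrow> complex) set) \<Rightarrow> bool" where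
  "is_code_full \<sigma> k1 k2 n M X \<epsilon> B \<delta> u D \<longleftrightarrow> is_code n M X u D \<and>
     avg_error \<sigma> n M u D \<le> \<epsilon> \<and> low_energy_frac k1 k2 n M u B \<le> \<delta>"

definition code_type :: "nat \<Rightarrow> nat \<Rightarrow> (nat \<Rightarrow> nat \<Rightarrow> complex) \<Rightarrow> complex \<Rightarrow> real" where
  "code_type n M u x = (1 / (real M * real n)) * (\<Sum>i\<in>{1..M}. \<Sum>m<n. if u i m = x then 1 else 0)"

definition layer_point :: "(nat \<Rightarrow> real) \<Rightarrow> (nat \<Rightarrow> nat) \<Rightarrow> (nat \<Rightarrow> real) \<Rightarrow> nat \<Rightarrow> nat \<Rightarrow> complex" where
  "layer_point A L \<alpha> c l = complex_of_real (A c) * exp (\<i> * complex_of_real (2 * pi * real l / real (L c) + \<alpha> c))"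

definition constellation :: "nat \<Rightarrow> (nat \<Rightarrow> real) \<Rightarrow> (nat \<Rightarrow> nat) \<Rightarrow> (nat \<Rightarrow> real) \<Rightarrow> complex set" where
  "constellation C A L \<alpha> = (\<Union>c\<in>{1..C}. layer_point A L \<alpha> c ` {..<L c})"

definition in_family :: "nat \<Rightarrow> nat \<Rightarrow> (nat \<Rightarrow> nat \<Rightarrow> complex) \<Rightarrow> (nat \<Rightarrow> (nat \<Rightarrow> complex) set)
    \<Rightarrow> nat \<Rightarrow> (nat \<Rightarrow> real) \<Rightarrow> (nat \<Rightarrow> nat) \<Rightarrow> (nat \<Rightarrow> real) \<Rightarrow> (nat \<Rightarrow> real) \<Rightarrow> (nat \<Rightarrow> real) \<Rightarrow> bool" where
  "in_family n M u D C A L \<alpha> p r \<longleftrightarrow>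
     (\<forall>c\<in>{1..C}. A c > 0) \<and> (\<forall>c\<in>{1..<C}. A c > A (Suc c)) \<and>
     (\<forall>c\<in>{1..C}. L c \<ge> 1) \<and>
     (\<forall>c\<in>{1..C}. p c \<ge> 0) \<and> (\<Sum>c\<in>{1..C}. p c) = 1 \<and>
     (\<forall>c\<in>{1..C}. r c > 0) \<and> (\<forall>c\<in>{1..<C}. A c - A (Suc c) \<ge> r c + r (Suc c)) \<and>
     (\<forall>i\<in>{1..M}. \<forall>m<n. u i m \<in> constellation C A L \<alpha>) \<and>
     (\<forall>i\<in>{1..M}. \<forall>j\<in>{1..M}. i \<noteq> j \<longrightarrow> (\<exists>m<n. u i m \<noteq> u j m)) \<and>
     (\<forall>c\<in>{1..C}. \<forall>l<L c. code_type n M u (layer_point A L \<alpha> c l) = p c / real (L c)) \<and>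
     (\<forall>i\<in>{1..M}. D i = PiE {..<n} (\<lambda>m. {y. \<forall>c\<in>{1..C}. \<forall>l<L c.
         u i m = layer_point A L \<alpha> c l \<longrightarrow> cmod (y - layer_point A L \<alpha> c l) \<le> r c}))"

end

theory Submission
  imports Defs
begin

lemma disc_measure:
  fixes \<nu> :: complex assumes "r \<ge> 0"
  shows "emeasure lborel (cball \<nu> r) = ennreal (pi * r\<^sup>2)"
  using emeasure_cball[of r \<nu>] assms by (simp add: unit_ball_vol_2 power2_eq_square)

lemma sq_lt: fixes t x :: real assumes "0 \<le> t" shows "(x < t\<^sup>2) = (sqrt x < t)"
  by (metis assms abs_of_nonneg real_sqrt_abs real_sqrt_less_iff)

lemma sq_le: fixes t x :: real assumes "0 \<le> t" shows "(t\<^sup>2 \<le> x) = (t \<le> sqrt x)"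
  using sq_lt[OF assms, of x] by linarith

lemma distr_sq:
  fixes \<nu> :: complex assumes r: "r \<ge> 0"
  shows "distr (density lborel (indicator (cball \<nu> r))) borel (\<lambda>z. (cmod (z - \<nu>))\<^sup>2)
         = density lborel (\<lambda>s. ennreal pi * indicator {0..r\<^sup>2} s)" (is "?L = ?R")
proof (rule measure_eqI_lessThan)
  show "sets ?L = sets borel" "sets ?R = sets borel" by auto
  have L: "emeasure ?L {x<..} = ennreal (pi * (r\<^sup>2 - min (r\<^sup>2) (max x 0)))" for x
  proof -
    have m1: "(indicator (cball \<nu> r) :: complex \<Rightarrow> ennreal) \<in> borel_measurable borel"
      by (intro borel_measurable_indicator borel_closed) simp
    have m2: "(\<lambda>z. (cmod (z - \<nu>))\<^sup>2) -` {x<..} \<in> sets borel"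
      unfolding vimage_def greaterThan_iff
      by (intro borel_open open_Collect_less continuous_intros)
    have "emeasure ?L {x<..} = emeasure (density lborel (indicator (cball \<nu> r)))
           ((\<lambda>z. (cmod (z - \<nu>))\<^sup>2) -` {x<..})"
      using m2 by (subst emeasure_distr) auto
    also have "\<dots> = emeasure lborel (cball \<nu> r \<inter> {z. x < (cmod (z - \<nu>))\<^sup>2})"
      using m1 m2 by (subst emeasure_density) (auto intro!: nn_integral_cong simp: split: split_indicator
         simp flip: nn_integral_indicator)
    also have "\<dots> = ennreal (pi * (r\<^sup>2 - min (r\<^sup>2) (max x 0)))"
    proof (cases "x < 0")
      case True
      then have "cball \<nu> r \<inter> {z. x < (cmod (z - \<nu>))\<^sup>2} = cball \<nu> r"
        by (auto intro: less_le_trans[OF _ zero_le_power2])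
      then show ?thesis using True r by (simp add: disc_measure)
    next
      case False
      show ?thesis
      proof (cases "sqrt x \<le> r")
        case True
        have eq: "cball \<nu> r \<inter> {z. x < (cmod (z - \<nu>))\<^sup>2} = cball \<nu> r - cball \<nu> (sqrt x)"
          using False by (auto simp: dist_norm norm_minus_commute sq_lt)
        have "emeasure lborel (cball \<nu> r - cball \<nu> (sqrt x)) = emeasure lborel (cball \<nu> r) - emeasure lborel (cball \<nu> (sqrt x))"
          using True False by (intro emeasure_Diff) (auto simp: disc_measure r disc_measure[of "sqrt x"])
        also have "\<dots> = ennreal (pi * (r\<^sup>2 - x))"
          using False True r by (simp add: disc_measure ennreal_minus[symmetric] algebra_simps)
        moreover have "x \<le> r\<^sup>2" using True r sq_lt[OF r, of x] sq_le[OF r, of x] 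
          by (metis abs_of_nonneg not_le real_sqrt_abs real_sqrt_less_iff)
        ultimately show ?thesis using eq False True r
          by (simp add: min_def)
      next
        case True': False
        have "cball \<nu> r \<inter> {z. x < (cmod (z - \<nu>))\<^sup>2} = {}"
          using False True' r by (auto simp: dist_norm norm_minus_commute sq_lt)
        moreover have "r\<^sup>2 < x" using True' r
          by (metis abs_of_nonneg not_le real_sqrt_abs real_sqrt_less_iff)
        ultimately show ?thesis using False True' by simp
      qed
    qed
    finally show ?thesis .
  qed
  show "emeasure ?L {x<..} < \<infinity>" for x using L by simp
  have R: "emeasure ?R {x<..} = ennreal (pi * (r\<^sup>2 - min (r\<^sup>2) (max x 0)))" for x
  proof -
    have "emeasure ?R {x<..} = (\<integral>\<^sup>+ s. ennreal pi * indicator ({0..r\<^sup>2} \<inter> {x<..}) s \<partial>lborel)"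
      by (subst emeasure_density) (auto intro!: nn_integral_cong split: split_indicator)
    also have "\<dots> = ennreal pi * emeasure lborel ({0..r\<^sup>2} \<inter> {x<..})"
      by (subst nn_integral_cmult) auto
    also have "\<dots> = ennreal (pi * (r\<^sup>2 - min (r\<^sup>2) (max x 0)))"
    proof -
      consider "x < 0" | "0 \<le> x" "x \<le> r\<^sup>2" | "r\<^sup>2 < x" by linarith
      then show ?thesis
      proof cases
        case 1
        then have "{0..r\<^sup>2} \<inter> {x<..} = {0..r\<^sup>2}" by auto
        then show ?thesis using 1 by (simp add: ennreal_mult')
      next
        case 2
        then have "{0..r\<^sup>2} \<inter> {x<..} = {x<..r\<^sup>2}" by auto
        then show ?thesis using 2 by (simp add: ennreal_mult')
      next
        case 3
        then have "{0..r\<^sup>2} \<inter> {x<..} = {}" by auto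
        then show ?thesis using 3 by simp
      qed
    qed
    finally show ?thesis .
  qed
  show "emeasure ?L {x<..} = emeasure ?R {x<..}" for x
    using L R by simp
qed

lemma exp_has_integral:
  fixes a R :: real assumes a: "a > 0" and R: "R \<ge> 0"
  shows "((\<lambda>s. exp (- s / a)) has_integral (a * (1 - exp (- R / a)))) {0..R}"
proof -
  have "((\<lambda>s. exp (- s / a)) has_integral ((\<lambda>s. - a * exp (- s / a)) R - (\<lambda>s. - a * exp (- s / a)) 0)) {0..R}"
  proof (rule fundamental_theorem_of_calculus[OF R])
    fix x assume "x \<in> {0..R}"
    have "((\<lambda>s. - a * exp (- s / a)) has_real_derivative exp (- x / a)) (at x within {0..R})"
      using a by (auto intro!: derivative_eq_intros simp: field_simps)
    then show "((\<lambda>s. - a * exp (- s / a)) has_vector_derivative exp (- x / a)) (at x within {0..R})"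
      by (simp add: has_real_derivative_iff_has_vector_derivative)
  qed
  then show ?thesis by (simp add: algebra_simps)
qed

lemma gauss_disc:
  fixes \<nu> :: complex assumes a: "a > 0" and r: "r \<ge> 0"
  shows "(\<integral>\<^sup>+z. ennreal (indicator (cball \<nu> r) z * exp (- (cmod (z - \<nu>))\<^sup>2 / a)) \<partial>lborel)
     = ennreal (pi * a * (1 - exp (- r\<^sup>2 / a)))"
proof -
  have m1: "(indicator (cball \<nu> r) :: complex \<Rightarrow> ennreal) \<in> borel_measurable borel"
    by (intro borel_measurable_indicator borel_closed) simp
  have "(\<integral>\<^sup>+z. ennreal (indicator (cball \<nu> r) z * exp (- (cmod (z - \<nu>))\<^sup>2 / a)) \<partial>lborel)
      = (\<integral>\<^sup>+z. indicator (cball \<nu> r) z * ennreal (exp (- (cmod (z - \<nu>))\<^sup>2 / a)) \<partial>lborel)"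
    by (intro nn_integral_cong) (simp split: split_indicator)
  also have "\<dots> = (\<integral>\<^sup>+z. ennreal (exp (- (cmod (z - \<nu>))\<^sup>2 / a)) \<partial>density lborel (indicator (cball \<nu> r)))"
    using m1 by (subst nn_integral_density) auto
  also have "\<dots> = (\<integral>\<^sup>+s. ennreal (exp (- s / a)) \<partial>distr (density lborel (indicator (cball \<nu> r))) borel (\<lambda>z. (cmod (z - \<nu>))\<^sup>2))"
    by (subst nn_integral_distr) auto
  also have "\<dots> = (\<integral>\<^sup>+s. ennreal (exp (- s / a)) \<partial>density lborel (\<lambda>s. ennreal pi * indicator {0..r\<^sup>2} s))"
    by (simp add: distr_sq r)
  also have "\<dots> = (\<integral>\<^sup>+s. ennreal pi * (ennreal (exp (- s / a)) * indicator {0..r\<^sup>2} s) \<partial>lborel)"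
    by (subst nn_integral_density) (auto intro!: nn_integral_cong simp: mult_ac)
  also have "\<dots> = ennreal pi * (\<integral>\<^sup>+s. ennreal (exp (- s / a)) * indicator {0..r\<^sup>2} s \<partial>lborel)"
    by (subst nn_integral_cmult) auto
  also have "(\<integral>\<^sup>+s. ennreal (exp (- s / a)) * indicator {0..r\<^sup>2} s \<partial>lborel) = ennreal (a * (1 - exp (- r\<^sup>2 / a)))"
    by (rule nn_integral_has_integral_lebesgue'[OF _ exp_has_integral[OF a]]) auto
  finally show ?thesis by (simp add: ennreal_mult' mult.assoc)
qed

lemma gauss_disc':
  fixes \<nu> :: complex assumes s: "\<sigma> > 0" and r: "r \<ge> 0"
  shows "(\<integral>\<^sup>+z. ennreal (indicator (cball \<nu> r) z * (1 / (pi * \<sigma>\<^sup>2) * exp (- (cmod (z - \<nu>))\<^sup>2 / \<sigma>\<^sup>2))) \<partial>lborel)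
     = ennreal (1 - exp (- r\<^sup>2 / \<sigma>\<^sup>2))"
proof -
  have "(\<integral>\<^sup>+z. ennreal (indicator (cball \<nu> r) z * (1 / (pi * \<sigma>\<^sup>2) * exp (- (cmod (z - \<nu>))\<^sup>2 / \<sigma>\<^sup>2))) \<partial>lborel)
    = (\<integral>\<^sup>+z. ennreal (1 / (pi * \<sigma>\<^sup>2)) * ennreal (indicator (cball \<nu> r) z * exp (- (cmod (z - \<nu>))\<^sup>2 / \<sigma>\<^sup>2)) \<partial>lborel)"
    using s by (intro nn_integral_cong) (simp add: ennreal_mult'[symmetric] mult_ac)
  also have "\<dots> = ennreal (1 / (pi * \<sigma>\<^sup>2)) * ennreal (pi * \<sigma>\<^sup>2 * (1 - exp (- r\<^sup>2 / \<sigma>\<^sup>2)))"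
  proof -
    have cb[measurable]: "cball \<nu> r \<in> sets borel" by (simp add: borel_closed)
    have "(\<lambda>z. ennreal (indicator (cball \<nu> r) z * exp (- (cmod (z - \<nu>))\<^sup>2 / \<sigma>\<^sup>2))) \<in> borel_measurable borel"
      by measurable
    then show ?thesis
      using s r gauss_disc[of "\<sigma>\<^sup>2" r \<nu>] by (subst nn_integral_cmult) auto
  qed
  also have "\<dots> = ennreal (1 - exp (- r\<^sup>2 / \<sigma>\<^sup>2))"
    using s by (simp add: ennreal_mult'[symmetric])
  finally show ?thesis .
qed

lemma success_bound:
  fixes \<nu> :: "nat \<Rightarrow> complex" and D :: "(nat \<Rightarrow> complex) set"
  assumes s: "\<sigma> > 0" and r: "r \<ge> 0" and D: "D \<subseteq> PiE {..<n} (\<lambda>m. cball (\<nu> m) r)"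
  shows "(LINT y:D|cn_measure n. awgn_density \<sigma> n y \<nu>) \<le> (1 - exp (- r\<^sup>2 / \<sigma>\<^sup>2)) ^ n"
proof -
  let ?g = "\<lambda>m x. indicator (cball (\<nu> m) r) x * (1 / (pi * \<sigma>\<^sup>2) * exp (- (cmod (x - \<nu> m))\<^sup>2 / \<sigma>\<^sup>2))"
  have PS: "product_sigma_finite (\<lambda>_::nat. lborel :: complex measure)"
    by (simp add: product_sigma_finite_def lborel.sigma_finite_measure_axioms)
  have cb[measurable]: "cball (\<nu> m) r \<in> sets borel" for m by (simp add: borel_closed)
  have "(\<integral>\<^sup>+y. ennreal (indicator D y *\<^sub>R awgn_density \<sigma> n y \<nu>) \<partial>cn_measure n)
       \<le> (\<integral>\<^sup>+y. (\<Prod>m\<in>{..<n}. ennreal (?g m (y m))) \<partial>cn_measure n)"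
  proof (intro nn_integral_mono)
    fix y
    have "indicator D y * awgn_density \<sigma> n y \<nu> \<le> (\<Prod>m\<in>{..<n}. ?g m (y m))"
    proof (cases "y \<in> D")
      case True
      then have "\<forall>m<n. y m \<in> cball (\<nu> m) r" using D by (auto simp: PiE_iff)
      then show ?thesis using True unfolding awgn_density_def by (intro eq_refl prod.cong) auto
    next
      case False
      then show ?thesis by (auto intro!: prod_nonneg)
    qed
    then show "ennreal (indicator D y *\<^sub>R awgn_density \<sigma> n y \<nu>) \<le> (\<Prod>m\<in>{..<n}. ennreal (?g m (y m)))"
      by (subst prod_ennreal) (auto intro!: ennreal_leI)
  qed
  also have "\<dots> = (\<Prod>m\<in>{..<n}. \<integral>\<^sup>+x. ennreal (?g m x) \<partial>lborel)"
    unfolding cn_measure_def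
    by (rule product_sigma_finite.product_nn_integral_prod[OF PS]) auto
  also have "\<dots> = (\<Prod>m\<in>{..<n}. ennreal (1 - exp (- r\<^sup>2 / \<sigma>\<^sup>2)))"
    using s r by (intro prod.cong refl gauss_disc')
  also have "\<dots> = ennreal ((1 - exp (- r\<^sup>2 / \<sigma>\<^sup>2)) ^ n)"
    by (subst prod_ennreal) auto
  finally show ?thesis
    unfolding set_lebesgue_integral_def
    by (intro integral_real_bounded) auto
qed

theorem lemma10:
  fixes n M C :: nat and \<sigma> k1 k2 \<epsilon> B \<delta> r :: real
    and A \<alpha> p rad :: "nat \<Rightarrow> real" and L :: "nat \<Rightarrow> nat"
    and u :: "nat \<Rightarrow> nat \<Rightarrow> complex" and D :: "nat \<Rightarrow> (nat \<Rightarrow> complex) set"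
  assumes "\<sigma> > 0" and "k1 > 0" and "k2 > 0" and "0 < \<epsilon>" and "\<epsilon> < 1"
    and "is_code_full \<sigma> k1 k2 n M (constellation C A L \<alpha>) \<epsilon> B \<delta> u D"
    and "in_family n M u D C A L \<alpha> p rad"
    and "\<forall>c\<in>{1..C}. rad c = r"
  shows "r \<ge> sqrt (\<sigma>\<^sup>2 * ln (1 / (1 - (1 - \<epsilon>) powr (1 / real n))))"
proof -
  note s = assms(1)
  have M: "M > 0" and err: "avg_error \<sigma> n M u D \<le> \<epsilon>"
    using assms(6) by (auto simp: is_code_full_def is_code_def)
  have fam: "(\<Sum>c\<in>{1..C}. p c) = 1" "\<forall>c\<in>{1..C}. rad c > 0"
     "\<forall>i\<in>{1..M}. \<forall>m<n. u i m \<in> constellation C A L \<alpha>"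
     "\<forall>i\<in>{1..M}. D i = PiE {..<n} (\<lambda>m. {y. \<forall>c\<in>{1..C}. \<forall>l<L c.
         u i m = layer_point A L \<alpha> c l \<longrightarrow> cmod (y - layer_point A L \<alpha> c l) \<le> rad c})"
    using assms(7) unfolding in_family_def by blast+
  have "C \<noteq> 0" proof assume "C = 0" then show False using fam(1) by simp qed
  then have "1 \<in> {1..C}" by auto
  then have r: "r > 0" using fam(2) assms(8) by auto
  define q where "q = 1 - exp (- r\<^sup>2 / \<sigma>\<^sup>2)"
  have sub: "D i \<subseteq> PiE {..<n} (\<lambda>m. cball (u i m) r)" if i: "i \<in> {1..M}" for i
  proof
    fix y assume y: "y \<in> D i"
    show "y \<in> PiE {..<n} (\<lambda>m. cball (u i m) r)"
    proof -
      have "y m \<in> cball (u i m) r" if m: "m < n" for m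
      proof -
        from fam(3) i m obtain c l where c: "c \<in> {1..C}" "l < L c" "u i m = layer_point A L \<alpha> c l"
          unfolding constellation_def by blast
        have "cmod (y m - layer_point A L \<alpha> c l) \<le> rad c"
          using y fam(4) i m c by (auto simp: PiE_iff)
        then show ?thesis using c assms(8) by (auto simp: dist_norm norm_minus_commute)
      qed
      then show ?thesis using y fam(4) i by (auto simp: PiE_iff)
    qed
  qed
  have I: "(LINT y:D i|cn_measure n. awgn_density \<sigma> n y (u i)) \<le> q ^ n" if "i \<in> {1..M}" for i
    unfolding q_def using success_bound[OF s _ sub[OF that]] r by simp
  have "1 - q ^ n = (1 / real M) * (\<Sum>i\<in>{1..M}. 1 - q ^ n)" using M by simp
  also have "\<dots> \<le> avg_error \<sigma> n M u D"
    unfolding avg_error_def using M I by (intro mult_left_mono sum_mono) auto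
  finally have key: "1 - \<epsilon> \<le> q ^ n" using err by linarith
  show ?thesis
  proof (cases "n = 0")
    case True
    then show ?thesis using assms(5) r by simp
  next
    case False
    have q0: "0 \<le> q" "q < 1" unfolding q_def by auto
    have qpos: "q > 0"
    proof (rule ccontr)
      assume "\<not> q > 0" then have "q = 0" using q0 by simp
      then show False using key False assms(5) by (simp add: zero_power)
    qed
    have "(1 - \<epsilon>) powr (1 / real n) \<le> (q ^ n) powr (1 / real n)"
      using key assms(5) by (intro powr_mono2) auto
    also have "\<dots> = q"
      using False qpos by (simp add: root_powr_inverse[symmetric] real_root_power_cancel)
    finally have "(1 - \<epsilon>) powr (1 / real n) \<le> q" .
    then have t: "exp (- r\<^sup>2 / \<sigma>\<^sup>2) \<le> 1 - (1 - \<epsilon>) powr (1 / real n)"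
      unfolding q_def by simp
    have "ln (1 / (1 - (1 - \<epsilon>) powr (1 / real n))) = - ln (1 - (1 - \<epsilon>) powr (1 / real n))"
      using t by (subst ln_div) auto
    also have "\<dots> \<le> - ln (exp (- r\<^sup>2 / \<sigma>\<^sup>2))"
      using t by (subst neg_le_iff_le) (intro ln_mono, auto)
    also have "\<dots> = r\<^sup>2 / \<sigma>\<^sup>2" by simp
    finally have "\<sigma>\<^sup>2 * ln (1 / (1 - (1 - \<epsilon>) powr (1 / real n))) \<le> r\<^sup>2"
      using s by (simp add: field_simps)
    then have "sqrt (\<sigma>\<^sup>2 * ln (1 / (1 - (1 - \<epsilon>) powr (1 / real n)))) \<le> sqrt (r\<^sup>2)"
      by (rule real_sqrt_le_mono)
    then show ?thesis using r by simp
  qed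
qed

end
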